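(* The family of induced paw-free graphs is feasible: for every integer $n \geq 1$ and every integer $m$ with $0 \leq m \leq \binom{n}{2}$, there exists a graph with $n$ vertices and $m$ edges containing no induced paw.
   Context: All graphs are finite and simple. The paw is the graph consisting of a triangle $K_3$ together with one additional vertex joined by an edge to exactly one vertex of the triangle. A graph is induced paw-free if it has no induced subgraph isomorphic to the paw. *)

theory Defs
  imports Main
begin

definition simple_graph :: "'a set \<Rightarrow> 'a set set \<Rightarrow> bool" where
  "simple_graph V E \<longleftrightarrow> finite V \<and> (\<forall>e\<in>E. e \<subseteq> V \<and> card e = 2)"

definition has_induced_paw :: "'a set \<Rightarrow> 'a set set \<Rightarrow> bool" where
  "has_induced_paw V E \<longleftrightarrow>
     (\<exists>a\<in>V. \<exists>b\<in>V. \<exists>c\<in>V. \<exists>d\<in>V. distinct [a, b, c, d] \<and>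
        {a, b} \<in> E \<and> {b, c} \<in> E \<and> {a, c} \<in> E \<and> {a, d} \<in> E \<and>
        {b, d} \<notin> E \<and> {c, d} \<notin> E)"

definition paw_free :: "'a set \<Rightarrow> 'a set set \<Rightarrow> bool" where
  "paw_free V E \<longleftrightarrow> \<not> has_induced_paw V E"

end

theory Submission
  imports Defs
begin

definition P2 :: "nat set \<Rightarrow> nat set set" where
  "P2 S = {e. e \<subseteq> S \<and> card e = 2}"

lemma card_P2: "finite S \<Longrightarrow> card (P2 S) = card S choose 2"
  unfolding P2_def by (rule n_subsets)

lemma choose2_Suc: "Suc k choose 2 = (k choose 2) + k"
  by (simp add: numeral_2_eq_2)

lemma choose2_mono: "a \<le> b \<Longrightarrow> (a::nat) choose 2 \<le> b choose 2"
proof (induction b)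
  case 0 then show ?case by simp
next
  case (Suc b)
  then show ?case by (cases "a = Suc b") (auto simp: choose2_Suc le_Suc_eq)
qed

lemma arithA: "\<exists>t p. r = (t choose 2) + p \<and> p < t"
proof (induction r)
  case 0 show ?case by (rule exI[of _ 1], rule exI[of _ 0]) simp
next
  case (Suc r)
  then obtain t p where tp: "r = (t choose 2) + p" "p < t" by blast
  show ?case
  proof (cases "Suc p < t")
    case True then show ?thesis using tp by (intro exI[of _ t] exI[of _ "Suc p"]) simp
  next
    case False then have "Suc p = t" using tp by simp
    then show ?thesis using tp by (intro exI[of _ "Suc t"] exI[of _ 0]) (simp add: choose2_Suc)
  qed
qed

lemma arithB: "1 \<le> m \<Longrightarrow> \<exists>k r. m + r = (k choose 2) \<and> r + 2 \<le> k"
proof (induction m)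
  case 0 then show ?case by simp
next
  case (Suc m)
  show ?case
  proof (cases "m = 0")
    case True then show ?thesis by (intro exI[of _ 2] exI[of _ 0]) simp
  next
    case False
    then obtain k r where kr: "m + r = (k choose 2)" "r + 2 \<le> k" using Suc by auto
    show ?thesis
    proof (cases "r = 0")
      case False then show ?thesis using kr by (intro exI[of _ k] exI[of _ "r - 1"]) simp
    next
      case True then show ?thesis using kr
        by (intro exI[of _ "Suc k"] exI[of _ "k - 1"]) (simp add: choose2_Suc)
    qed
  qed
qed

lemma arithC: "p < t \<Longrightarrow> t + 2 * p \<le> (t choose 2) + p + 2"
proof (cases "t \<le> 3")
  case True
  moreover assume "p < t"
  ultimately show ?thesis
    by (cases t; cases p) (auto simp: numeral_2_eq_2 numeral_3_eq_3 le_Suc_eq)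
next
  case False
  assume "p < t"
  have "4 * (t - 1) \<le> t * (t - 1)" using False by (intro mult_le_mono1) simp
  then have "2 * (t - 1) \<le> t * (t - 1) div 2" by linarith
  then have "2 * (t - 1) \<le> t choose 2" by (simp only: choose_two)
  then show ?thesis using \<open>p < t\<close> by simp
qed

lemma construct:
  assumes "t + 2 * p \<le> k" "k \<le> n"
  shows "\<exists>(V :: nat set) (E :: nat set set).
           simple_graph V E \<and> card V = n \<and> card E = (k choose 2) - ((t choose 2) + p) \<and> paw_free V E"
proof -
  define C where "C = P2 {0..<t}"
  define M where "M = (\<lambda>i. {t + 2*i, t + 2*i + 1}) ` {0..<p}"
  define B where "B = C \<union> M"
  define E where "E = P2 {0..<k} - B"
  have finP: "finite (P2 S)" if "finite S" for S
    using that unfolding P2_def by (auto intro: finite_subset[of _ "Pow S"])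
  have CP: "C \<subseteq> P2 {0..<k}" using assms unfolding C_def P2_def by auto
  have MP: "M \<subseteq> P2 {0..<k}" using assms unfolding M_def P2_def by auto
  have BP: "B \<subseteq> P2 {0..<k}" using CP MP B_def by auto
  have injM: "inj_on (\<lambda>i. {t + 2*i, t + 2*i + 1}) {0..<p}"
    by (auto simp: inj_on_def doubleton_eq_iff)
  have cM: "card M = p" unfolding M_def using card_image[OF injM] by simp
  have cC: "card C = t choose 2" unfolding C_def using card_P2[of "{0..<t}"] by simp
  have disj: "C \<inter> M = {}" unfolding C_def M_def P2_def by auto
  have cB: "card B = (t choose 2) + p"
    unfolding B_def using card_Un_disjoint[OF _ _ disj] cM cC finP[of "{0..<t}"] C_def M_def by simp
  have cE: "card E = (k choose 2) - ((t choose 2) + p)"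
    unfolding E_def using card_Diff_subset[OF _ BP] cB card_P2[of "{0..<k}"]
      finite_subset[OF BP finP] by simp
  have sg: "simple_graph {0..<n} E"
    unfolding simple_graph_def E_def P2_def using assms by auto
  have pf: "paw_free {0..<n} E"
    unfolding paw_free_def has_induced_paw_def
  proof clarify
    fix a b c d
    assume H: "distinct [a, b, c, d]" "{a, b} \<in> E" "{b, c} \<in> E" "{a, c} \<in> E" "{a, d} \<in> E"
      "{b, d} \<notin> E" "{c, d} \<notin> E"
    have lt: "a < k" "b < k" "c < k" "d < k" using H unfolding E_def P2_def by auto
    have bd: "{b, d} \<in> B" using H lt unfolding E_def P2_def by auto
    have cd: "{c, d} \<in> B" using H lt unfolding E_def P2_def by auto
    have bc: "{b, c} \<notin> B" using H unfolding E_def by auto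
    show False
    proof (cases "{b, d} \<in> C")
      case True
      then have "b < t" "d < t" unfolding C_def P2_def by auto
      then have "{c, d} \<notin> M" unfolding M_def by (auto simp: doubleton_eq_iff)
      then have "{c, d} \<in> C" using cd B_def by auto
      then have "c < t" unfolding C_def P2_def by auto
      then have "{b, c} \<in> C" using \<open>b < t\<close> H(1) unfolding C_def P2_def by auto
      then show False using bc B_def by auto
    next
      case False
      then have "{b, d} \<in> M" using bd B_def by auto
      then obtain i where i: "{b, d} = {t + 2*i, t + 2*i + 1}" unfolding M_def by auto
      then have "d \<ge> t" by (auto simp: doubleton_eq_iff)
      then have "{c, d} \<notin> C" unfolding C_def P2_def by auto
      then have "{c, d} \<in> M" using cd B_def by auto
      then obtain j where j: "{c, d} = {t + 2*j, t + 2*j + 1}" unfolding M_def by auto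
      have "i = j" using i j by (auto simp: doubleton_eq_iff)
      then have "{b, d} = {c, d}" using i j by simp
      then show False using H(1) by (auto simp: doubleton_eq_iff)
    qed
  qed
  show ?thesis using sg pf cE by (intro exI[of _ "{0..<n}"] exI[of _ E]) simp
qed

theorem mainTheorem3:
  fixes n m :: nat
  assumes "n \<ge> 1" and "m \<le> n choose 2"
  shows "\<exists>(V :: nat set) (E :: nat set set).
           simple_graph V E \<and> card V = n \<and> card E = m \<and> paw_free V E"
proof (cases "m = 0")
  case True
  then show ?thesis using construct[of 0 0 0 n] by simp
next
  case False
  then obtain k r where kr: "m + r = (k choose 2)" "r + 2 \<le> k" using arithB[of m] by auto
  obtain t p where tp: "r = (t choose 2) + p" "p < t" using arithA[of r] by blast
  have "k \<le> n"
  proof (rule ccontr)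
    assume "\<not> k \<le> n"
    then have "n \<le> k - 1" by simp
    then have "n choose 2 \<le> (k - 1) choose 2" by (rule choose2_mono)
    moreover have "k choose 2 = ((k - 1) choose 2) + (k - 1)"
      using choose2_Suc[of "k - 1"] kr(2) by simp
    ultimately show False using kr assms(2) by simp
  qed
  moreover have "t + 2 * p \<le> k" using arithC[OF tp(2)] tp(1) kr(2) by simp
  moreover have "m = (k choose 2) - ((t choose 2) + p)" using kr tp by simp
  ultimately show ?thesis using construct[of t p k n] by simp
qed

end
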